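(* Let $g(x)=\frac{\sin\log x}{\log x}$ for $0<x<1$ and $g(0)=g(1)=0$. If $\tfrac12<\sigma<1$, then $$\lim_{n\to\infty}\frac{S_{n,\sigma}(g)}{n^{2(1-\sigma)}}=\frac{1}{2(1-\sigma)}\arctan\Big(\frac{1}{1-\sigma}\Big),$$ and more precisely $$\frac{S_{n,\sigma}(g)}{n^{2(1-\sigma)}}=\frac{1}{2(1-\sigma)}\arctan\Big(\frac{1}{1-\sigma}\Big)+O_\sigma\Big(\frac{1}{n^{2(1-\sigma)/3}}\Big).$$
   Context: $S_{n,\sigma}(f)=\sum_{1\le k\le\ell\le n}\frac{1}{(k\ell)^\sigma}f\big(\frac k\ell\big)$. *)

theory Defs
  imports "HOL-Analysis.Analysis" "HOL-Library.Landau_Symbols"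
begin

definition S_sum :: "nat \<Rightarrow> real \<Rightarrow> (real \<Rightarrow> real) \<Rightarrow> real" where
  "S_sum n \<sigma> f = (\<Sum>l\<in>{1..n}. \<Sum>k\<in>{1..l}.
      f (real k / real l) / (real k * real l) powr \<sigma>)"

definition g5 :: "real \<Rightarrow> real" where
  "g5 x = (if 0 < x \<and> x < 1 then sin (ln x) / ln x else 0)"

end

theory Submission
  imports Defs
begin

definition gg :: "real \<Rightarrow> real \<Rightarrow> complex \<Rightarrow> complex" where
  "gg \<sigma> s z = exp (Complex (-\<sigma>) s * Ln z)"
definition GG :: "real \<Rightarrow> real \<Rightarrow> complex \<Rightarrow> complex" where
  "GG \<sigma> s z = exp (Complex (1-\<sigma>) s * Ln z) / Complex (1-\<sigma>) s"

lemma notnp: "0 < Re z \<Longrightarrow> z \<notin> \<real>\<^sub>\<le>\<^sub>0"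
  by (auto simp: complex_nonpos_Reals_iff)

lemma gg_deriv: assumes "0 < Re z"
  shows "(gg \<sigma> s has_field_derivative (Complex (-\<sigma>) s * gg \<sigma> s z / z)) (at z)"
proof -
  have "((\<lambda>z. exp (Complex (-\<sigma>) s * Ln z)) has_field_derivative
     exp (Complex (-\<sigma>) s * Ln z) * (Complex (-\<sigma>) s * inverse z)) (at z)"
    using notnp[OF assms] by (auto intro!: derivative_eq_intros)
  then show ?thesis unfolding gg_def[abs_def] by (simp add: field_simps)
qed

lemma GG_deriv: assumes "0 < Re z" "\<sigma> < 1"
  shows "(GG \<sigma> s has_field_derivative gg \<sigma> s z) (at z)"
proof -
  have z0: "z \<noteq> 0" using assms by auto
  have w0: "Complex (1-\<sigma>) s \<noteq> 0" using assms by (simp add: complex_eq_iff)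
  have "((\<lambda>z. exp (Complex (1-\<sigma>) s * Ln z) / Complex (1-\<sigma>) s) has_field_derivative
     exp (Complex (1-\<sigma>) s * Ln z) * (Complex (1-\<sigma>) s * inverse z) / Complex (1-\<sigma>) s) (at z)"
    using notnp[OF assms(1)] by (auto intro!: derivative_eq_intros)
  moreover have "exp (Complex (1-\<sigma>) s * Ln z) * (Complex (1-\<sigma>) s * inverse z) / Complex (1-\<sigma>) s
     = gg \<sigma> s z"
  proof -
    have "Complex (1-\<sigma>) s = Complex (-\<sigma>) s + 1" by (simp add: complex_eq_iff)
    then have "exp (Complex (1-\<sigma>) s * Ln z) = gg \<sigma> s z * z"
      using z0 by (simp add: gg_def distrib_right exp_add)
    then show ?thesis using w0 z0 by (simp add: field_simps)
  qed
  ultimately show ?thesis unfolding GG_def[abs_def] by simp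
qed

lemma gg_real: assumes "0 < x"
  shows "gg \<sigma> s (of_real x) = of_real (x powr (-\<sigma>)) * cis (s * ln x)"
proof -
  have "Complex (-\<sigma>) s * of_real (ln x) = of_real (-\<sigma> * ln x) + \<i> * of_real (s * ln x)"
    by (simp add: complex_eq_iff)
  then have "gg \<sigma> s (of_real x) = exp (of_real (-\<sigma> * ln x)) * exp (\<i> * of_real (s * ln x))"
    by (simp only: gg_def Ln_of_real[OF assms] \<open>Complex (-\<sigma>) s * of_real (ln x) = _\<close> exp_add)
  also have "\<dots> = of_real (x powr (-\<sigma>)) * cis (s * ln x)"
    using assms by (simp add: cis_conv_exp powr_def exp_of_real[symmetric] mult.commute)
  finally show ?thesis .
qed

lemma norm_gg: "0 < x \<Longrightarrow> norm (gg \<sigma> s (of_real x)) = x powr (-\<sigma>)"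
  by (simp add: gg_real norm_mult)

lemma norm_GG: assumes "0 < x" "\<sigma> < 1"
  shows "norm (GG \<sigma> s (of_real x)) = x powr (1-\<sigma>) / cmod (Complex (1-\<sigma>) s)"
  using assms by (simp add: GG_def Ln_of_real norm_divide powr_def)

lemma seg_real:
  assumes "z \<in> closed_segment (of_real k) (of_real (k+1) :: complex)"
  shows "\<exists>x. z = of_real x \<and> k \<le> x \<and> x \<le> k+1"
  using assms unfolding closed_segment_of_real by (auto simp: closed_segment_eq_real_ivl)

lemma step_bound:
  assumes k: "1 \<le> k" and "0 < \<sigma>" "\<sigma> < 1" "\<bar>s\<bar> \<le> 1"
  shows "norm (GG \<sigma> s (of_real (k+1)) - GG \<sigma> s (of_real k) - gg \<sigma> s (of_real k))
           \<le> 2 * k powr (-1-\<sigma>)"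
proof -
  define S where "S = closed_segment (of_real k) (of_real (k+1) :: complex)"
  have pos: "0 < Re z" if "z \<in> S" for z
    using seg_real[of z k] that k unfolding S_def by auto
  have kS: "of_real k \<in> S" and k1S: "of_real (k+1) \<in> S" unfolding S_def by auto
  have b1: "norm (gg \<sigma> s z - gg \<sigma> s (of_real k)) \<le> 2 * k powr (-1-\<sigma>) * norm (z - of_real k)"
    if "z \<in> S" for z
  proof (rule field_differentiable_bound[where f' = "\<lambda>z. Complex (-\<sigma>) s * gg \<sigma> s z / z"])
    show "convex S" unfolding S_def by simp
    show "(gg \<sigma> s has_field_derivative Complex (- \<sigma>) s * gg \<sigma> s z / z) (at z within S)"
      if "z \<in> S" for z
      using gg_deriv[OF pos[OF that]] by (rule has_field_derivative_at_within)
    show "norm (Complex (- \<sigma>) s * gg \<sigma> s z / z) \<le> 2 * k powr (-1-\<sigma>)" if zS: "z \<in> S" for z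
    proof -
      obtain x where x: "z = of_real x" "k \<le> x" "x \<le> k+1" using seg_real zS S_def by blast
      have x0: "0 < x" using x k by auto
      have c: "cmod (Complex (- \<sigma>) s) \<le> 2"
        using cmod_le[of "Complex (- \<sigma>) s"] assms by simp
      have e1: "norm (Complex (- \<sigma>) s * gg \<sigma> s z / z) = cmod (Complex (- \<sigma>) s) * (x powr (-\<sigma>) / x)"
        using x x0 by (simp add: norm_mult norm_divide norm_gg)
      have e2: "x powr (-\<sigma>) / x = x powr (-1-\<sigma>)"
        using x0 by (simp add: powr_diff powr_minus field_simps)
      have e3: "x powr (-1-\<sigma>) \<le> k powr (-1-\<sigma>)"
        using powr_mono2'[of "-1-\<sigma>" k x] x k assms by simp
      have "cmod (Complex (- \<sigma>) s) * x powr (-1-\<sigma>) \<le> 2 * k powr (-1-\<sigma>)"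
        by (rule mult_mono[OF c e3]) auto
      then show ?thesis using e1 e2 by simp
    qed
  next
    show "z \<in> S" by (fact that)
  next
    show "of_real k \<in> S" by (fact kS)
  qed
  have b2: "norm (gg \<sigma> s z - gg \<sigma> s (of_real k)) \<le> 2 * k powr (-1-\<sigma>)" if zS: "z \<in> S" for z
  proof -
    obtain x where x: "z = of_real x" "k \<le> x" "x \<le> k+1" using seg_real zS S_def by blast
    have "norm (z - of_real k) = \<bar>x - k\<bar>" using x by (metis norm_of_real of_real_diff)
    then have "norm (z - of_real k) \<le> 1" using x by simp
    then have "2 * k powr (-1-\<sigma>) * norm (z - of_real k) \<le> 2 * k powr (-1-\<sigma>)"
      by (simp add: mult_left_le)
    then show ?thesis using b1[OF zS] by linarith
  qed
  have "norm ((GG \<sigma> s (of_real (k+1)) - gg \<sigma> s (of_real k) * of_real (k+1))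
            - (GG \<sigma> s (of_real k) - gg \<sigma> s (of_real k) * of_real k))
        \<le> 2 * k powr (-1-\<sigma>) * norm (of_real (k+1) - of_real k :: complex)"
  proof (rule field_differentiable_bound[where f' = "\<lambda>z. gg \<sigma> s z - gg \<sigma> s (of_real k)"
          and f = "\<lambda>z. GG \<sigma> s z - gg \<sigma> s (of_real k) * z"])
    show "convex S" unfolding S_def by simp
    show "((\<lambda>z. GG \<sigma> s z - gg \<sigma> s (of_real k) * z) has_field_derivative
            gg \<sigma> s z - gg \<sigma> s (of_real k)) (at z within S)" if "z \<in> S" for z
    proof -
      have "((\<lambda>z. GG \<sigma> s z - gg \<sigma> s (of_real k) * z) has_field_derivative
            gg \<sigma> s z - gg \<sigma> s (of_real k) * 1) (at z)"
        by (rule DERIV_diff[OF GG_deriv[OF pos[OF that] \<open>\<sigma> < 1\<close>] DERIV_cmult[OF DERIV_ident]])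
      then show ?thesis by (simp add: has_field_derivative_at_within)
    qed
  next
    show "norm (gg \<sigma> s z - gg \<sigma> s (of_real k)) \<le> 2 * k powr (-1-\<sigma>)" if "z \<in> S" for z
      using b2 that by blast
  qed (fact k1S, fact kS)
  then show ?thesis by (simp add: algebra_simps)
qed

lemma step_bound_nat:
  assumes k: "1 \<le> k" and "0 < \<sigma>" "\<sigma> < 1" "\<bar>s\<bar> \<le> 1"
  shows "norm (GG \<sigma> s (of_nat (Suc k)) - GG \<sigma> s (of_nat k) - gg \<sigma> s (of_nat k))
           \<le> 2 * real k powr (-1-\<sigma>)"
  using step_bound[of "real k" \<sigma> s] assms by (simp add: add.commute)

lemma tele:
  assumes "0 < \<sigma>" "\<sigma> < 1" "\<bar>s\<bar> \<le> 1"
  shows "norm ((\<Sum>k=1..n. gg \<sigma> s (of_nat k)) - GG \<sigma> s (of_nat (Suc n)) + GG \<sigma> s 1)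
           \<le> 2 * (\<Sum>k=1..n. real k powr (-1-\<sigma>))"
proof (induction n)
  case 0
  then show ?case by simp
next
  case (Suc n)
  have "(\<Sum>k=1..Suc n. gg \<sigma> s (of_nat k)) - GG \<sigma> s (of_nat (Suc (Suc n))) + GG \<sigma> s 1
     = ((\<Sum>k=1..n. gg \<sigma> s (of_nat k)) - GG \<sigma> s (of_nat (Suc n)) + GG \<sigma> s 1)
       - (GG \<sigma> s (of_nat (Suc (Suc n))) - GG \<sigma> s (of_nat (Suc n)) - gg \<sigma> s (of_nat (Suc n)))"
    by (simp add: algebra_simps)
  also have "norm \<dots> \<le> norm ((\<Sum>k=1..n. gg \<sigma> s (of_nat k)) - GG \<sigma> s (of_nat (Suc n)) + GG \<sigma> s 1)
       + norm (GG \<sigma> s (of_nat (Suc (Suc n))) - GG \<sigma> s (of_nat (Suc n)) - gg \<sigma> s (of_nat (Suc n)))"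
    by (rule norm_triangle_ineq4)
  also have "\<dots> \<le> 2 * (\<Sum>k=1..n. real k powr (-1-\<sigma>)) + 2 * real (Suc n) powr (-1-\<sigma>)"
    using Suc.IH step_bound_nat[of "Suc n" \<sigma> s] assms by (intro add_mono) auto
  also have "\<dots> = 2 * (\<Sum>k=1..Suc n. real k powr (-1-\<sigma>))" by (simp add: algebra_simps)
  finally show ?case .
qed

definition ZZ :: "real \<Rightarrow> real" where "ZZ \<sigma> = suminf (\<lambda>k. real k powr (-1-\<sigma>))"

lemma sum_le_ZZ: assumes "0 < \<sigma>" shows "(\<Sum>k=1..n. real k powr (-1-\<sigma>)) \<le> ZZ \<sigma>"
  unfolding ZZ_def
  by (rule sum_le_suminf) (use assms in \<open>auto simp: summable_real_powr_iff\<close>)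

lemma A_bound:
  assumes "0 < \<sigma>" "\<sigma> < 1" "\<bar>s\<bar> \<le> 1" "1 \<le> n"
  shows "norm ((\<Sum>k=1..n. gg \<sigma> s (of_nat k)) - GG \<sigma> s (of_nat n)) \<le> 2 * ZZ \<sigma> + 3 + 1/(1-\<sigma>)"
proof -
  have t: "norm ((\<Sum>k=1..n. gg \<sigma> s (of_nat k)) - GG \<sigma> s (of_nat (Suc n)) + GG \<sigma> s 1) \<le> 2 * ZZ \<sigma>"
    using tele[OF assms(1-3), of n] sum_le_ZZ[OF assms(1), of n] by linarith
  have g1: "norm (GG \<sigma> s 1) \<le> 1/(1-\<sigma>)"
  proof -
    have "norm (GG \<sigma> s 1) = 1 / cmod (Complex (1-\<sigma>) s)" by (simp add: GG_def norm_divide)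
    moreover have "1-\<sigma> \<le> cmod (Complex (1-\<sigma>) s)" using abs_Re_le_cmod[of "Complex (1-\<sigma>) s"] by simp
    ultimately show ?thesis using assms by (simp add: frac_le)
  qed
  have sb: "norm (GG \<sigma> s (of_nat (Suc n)) - GG \<sigma> s (of_nat n) - gg \<sigma> s (of_nat n)) \<le> 2 * real n powr (-1-\<sigma>)"
    using step_bound_nat[OF assms(4,1,2,3)] .
  have p1: "real n powr (-1-\<sigma>) \<le> 1" using powr_mono2'[of "-1-\<sigma>" 1 "real n"] assms by simp
  have p2: "norm (gg \<sigma> s (of_nat n)) \<le> 1"
    using norm_gg[of "real n" \<sigma> s] powr_mono2'[of "-\<sigma>" 1 "real n"] assms by simp
  have d: "norm (GG \<sigma> s (of_nat (Suc n)) - GG \<sigma> s (of_nat n)) \<le> 3"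
    using norm_triangle_ineq4[of "GG \<sigma> s (of_nat (Suc n)) - GG \<sigma> s (of_nat n) - gg \<sigma> s (of_nat n)" "- gg \<sigma> s (of_nat n)"]
      sb p1 p2 by simp
  have "(\<Sum>k=1..n. gg \<sigma> s (of_nat k)) - GG \<sigma> s (of_nat n) =
     ((\<Sum>k=1..n. gg \<sigma> s (of_nat k)) - GG \<sigma> s (of_nat (Suc n)) + GG \<sigma> s 1) - GG \<sigma> s 1
     + (GG \<sigma> s (of_nat (Suc n)) - GG \<sigma> s (of_nat n))" by simp
  also have "norm \<dots> \<le> 2 * ZZ \<sigma> + 1/(1-\<sigma>) + 3"
    using norm_triangle_ineq[of "((\<Sum>k=1..n. gg \<sigma> s (of_nat k)) - GG \<sigma> s (of_nat (Suc n)) + GG \<sigma> s 1) - GG \<sigma> s 1"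
        "GG \<sigma> s (of_nat (Suc n)) - GG \<sigma> s (of_nat n)"]
      norm_triangle_ineq4[of "((\<Sum>k=1..n. gg \<sigma> s (of_nat k)) - GG \<sigma> s (of_nat (Suc n)) + GG \<sigma> s 1)" "GG \<sigma> s 1"]
      t g1 d by linarith
  finally show ?thesis by simp
qed

lemma gg_cnj_Re:
  assumes "1 \<le> k" "1 \<le> l"
  shows "Re (gg \<sigma> s (of_nat k) * cnj (gg \<sigma> s (of_nat l)))
     = real k powr (-\<sigma>) * real l powr (-\<sigma>) * cos (s * (ln (real k) - ln (real l)))"
proof -
  have "gg \<sigma> s (of_nat k) * cnj (gg \<sigma> s (of_nat l)) =
     of_real (real k powr (-\<sigma>) * real l powr (-\<sigma>)) * cis (s * ln (real k) + - (s * ln (real l)))"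
    using gg_real[of "real k" \<sigma> s] gg_real[of "real l" \<sigma> s] assms
    by (simp add: cis_cnj cis_mult)
  then show ?thesis by (simp add: algebra_simps)
qed

lemma normsq_sum:
  shows "(norm (\<Sum>k=1..n. gg \<sigma> s (of_nat k)))^2 =
    (\<Sum>k=1..n. \<Sum>l=1..n. real k powr (-\<sigma>) * real l powr (-\<sigma>) * cos (s * (ln (real k) - ln (real l))))"
proof -
  let ?A = "\<Sum>k=1..n. gg \<sigma> s (of_nat k)"
  have "of_real ((norm ?A)^2) = ?A * cnj ?A" by (rule complex_norm_square)
  also have "\<dots> = (\<Sum>k=1..n. \<Sum>l=1..n. gg \<sigma> s (of_nat k) * cnj (gg \<sigma> s (of_nat l)))"
    by (simp add: cnj_sum sum_product)
  finally have "(norm ?A)^2 = Re (\<Sum>k=1..n. \<Sum>l=1..n. gg \<sigma> s (of_nat k) * cnj (gg \<sigma> s (of_nat l)))"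
    by (metis Re_complex_of_real)
  also have "\<dots> = (\<Sum>k=1..n. \<Sum>l=1..n. Re (gg \<sigma> s (of_nat k) * cnj (gg \<sigma> s (of_nat l))))"
    by (simp add: Re_sum)
  also have "\<dots> = (\<Sum>k=1..n. \<Sum>l=1..n. real k powr (-\<sigma>) * real l powr (-\<sigma>) * cos (s * (ln (real k) - ln (real l))))"
    by (intro sum.cong refl) (metis atLeastAtMost_iff gg_cnj_Re)
  finally show ?thesis .
qed

lemma sym_sum:
  fixes h :: "nat \<Rightarrow> nat \<Rightarrow> real"
  assumes "\<And>k l. h k l = h l k"
  shows "(\<Sum>k=1..n. \<Sum>l=1..n. h k l) = 2 * (\<Sum>l=1..n. \<Sum>k=1..l. h k l) - (\<Sum>l=1..n. h l l)"
proof (induction n)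
  case 0 then show ?case by simp
next
  case (Suc n)
  have e: "(\<Sum>l=1..n. h (Suc n) l) = (\<Sum>k=1..n. h k (Suc n))" using assms by simp
  have "(\<Sum>k=1..Suc n. \<Sum>l=1..Suc n. h k l) = (\<Sum>k=1..n. \<Sum>l=1..n. h k l)
     + (\<Sum>k=1..n. h k (Suc n)) + (\<Sum>l=1..n. h (Suc n) l) + h (Suc n) (Suc n)"
    by (simp add: sum.distrib)
  then show ?case using Suc.IH e by simp
qed

lemma ftc01:
  fixes F f :: "real \<Rightarrow> real"
  assumes "\<And>s. (F has_real_derivative f s) (at s)"
  shows "(f has_integral (F 1 - F 0)) {0..1}"
  by (rule fundamental_theorem_of_calculus)
     (auto intro!: has_real_derivative_iff_has_vector_derivative[THEN iffD1, OF has_field_derivative_at_within[OF assms]])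

lemma cos_int:
  fixes c :: real
  assumes "c \<noteq> 0"
  shows "((\<lambda>s. cos (s * c)) has_integral (sin c / c)) {0..1}"
proof -
  have "((\<lambda>s. sin (s * c) / c) has_real_derivative cos (s * c)) (at s)" for s
  proof -
    show ?thesis using assms by (auto intro!: derivative_eq_intros)
  qed
  from ftc01[OF this] show ?thesis by simp
qed

lemma arctan_int:
  assumes "0 < a"
  shows "((\<lambda>s. 1 / (a^2 + s^2)) has_integral (arctan (1/a) / a)) {0..1}"
proof -
  have "((\<lambda>s. arctan (s / a) / a) has_real_derivative 1 / (a^2 + s^2)) (at s)" for s
  proof -
    have "0 < a * (a * a) + a * (s * s)" using assms by (simp add: add_pos_nonneg)
    then have e: "inverse (1 + (s/a)^2) * (1 / a) / a = 1 / (a^2 + s^2)"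
      using assms by (simp add: field_simps power2_eq_square)
    show ?thesis unfolding e[symmetric] using assms by (auto intro!: derivative_eq_intros)
  qed
  from ftc01[OF this] show ?thesis by simp
qed

lemma term_int:
  assumes "1 \<le> k" "k \<le> l"
  shows "((\<lambda>s. real k powr (-\<sigma>) * real l powr (-\<sigma>) * cos (s * (ln (real k) - ln (real l))))
     has_integral (g5 (real k / real l) / (real k * real l) powr \<sigma>
         + (if k = l then real k powr (-\<sigma>) * real l powr (-\<sigma>) else 0))) {0..1}"
proof (cases "k = l")
  case True
  then show ?thesis using has_integral_const_real[of "real l powr (-\<sigma>) * real l powr (-\<sigma>)" 0 1]
    by (simp add: g5_def)
next
  case False
  then have kl: "k < l" using assms by simp
  define c where "c = ln (real k) - ln (real l)"
  have c0: "c < 0" using kl assms by (simp add: c_def)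
  have lnq: "ln (real k / real l) = c" using assms kl by (simp add: c_def ln_div)
  have q: "0 < real k / real l" "real k / real l < 1" using assms kl by auto
  have g: "g5 (real k / real l) = sin c / c" using q lnq by (simp add: g5_def)
  have p: "1 / (real k * real l) powr \<sigma> = real k powr (-\<sigma>) * real l powr (-\<sigma>)"
    using assms by (simp add: powr_mult powr_minus divide_inverse)
  have "((\<lambda>s. real k powr (-\<sigma>) * real l powr (-\<sigma>) * cos (s * c)) has_integral
      (real k powr (-\<sigma>) * real l powr (-\<sigma>) * (sin c / c))) {0..1}"
    using has_integral_mult_right[OF cos_int[of c]] c0 by simp
  moreover have "real k powr (-\<sigma>) * real l powr (-\<sigma>) * (sin c / c) =
     g5 (real k / real l) / (real k * real l) powr \<sigma>"
    using g p by (metis mult.commute times_divide_eq_right mult_1)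
  ultimately show ?thesis using False by (simp add: c_def)
qed

lemma sq_diff_bound:
  fixes x y B Y :: real
  assumes "\<bar>x - y\<bar> \<le> B" "0 \<le> x" "0 \<le> y" "y \<le> Y"
  shows "\<bar>x^2 - y^2\<bar> \<le> B * (2 * Y + B)"
proof -
  have "x^2 - y^2 = (x - y) * (x + y)" by (simp add: power2_eq_square algebra_simps)
  then have "\<bar>x^2 - y^2\<bar> = \<bar>x - y\<bar> * (x + y)" using assms
    by (simp add: abs_mult)
  also have "\<dots> \<le> B * (2 * Y + B)"
    using assms by (intro mult_mono) auto
  finally show ?thesis .
qed

lemma pointwise_bound:
  assumes "0 < \<sigma>" "\<sigma> < 1" "\<bar>s\<bar> \<le> 1" "1 \<le> n"
  shows "\<bar>(norm (\<Sum>k=1..n. gg \<sigma> s (of_nat k)))^2 - real n powr (2*(1-\<sigma>)) / ((1-\<sigma>)^2 + s^2)\<bar>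
     \<le> (2 * ZZ \<sigma> + 3 + 1/(1-\<sigma>)) * (2 * (real n powr (1-\<sigma>) / (1-\<sigma>)) + (2 * ZZ \<sigma> + 3 + 1/(1-\<sigma>)))"
proof -
  let ?A = "\<Sum>k=1..n. gg \<sigma> s (of_nat k)"
  let ?M = "GG \<sigma> s (of_nat n)"
  have nM: "norm ?M = real n powr (1-\<sigma>) / cmod (Complex (1-\<sigma>) s)"
    using norm_GG[of "real n" \<sigma> s] assms by simp
  have cpos: "1-\<sigma> \<le> cmod (Complex (1-\<sigma>) s)" using abs_Re_le_cmod[of "Complex (1-\<sigma>) s"] by simp
  have c2: "(cmod (Complex (1-\<sigma>) s))^2 = (1-\<sigma>)^2 + s^2" by (simp add: cmod_power2)
  have M2: "(norm ?M)^2 = real n powr (2*(1-\<sigma>)) / ((1-\<sigma>)^2 + s^2)"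
  proof -
    have "(real n powr (1-\<sigma>))^2 = real n powr (2*(1-\<sigma>))"
      by (simp add: power2_eq_square powr_add[symmetric])
    then show ?thesis unfolding nM power_divide c2 by simp
  qed
  have Mle: "norm ?M \<le> real n powr (1-\<sigma>) / (1-\<sigma>)"
    unfolding nM using cpos assms by (intro divide_left_mono) (auto intro!: mult_pos_pos)
  have "\<bar>norm ?A - norm ?M\<bar> \<le> 2 * ZZ \<sigma> + 3 + 1/(1-\<sigma>)"
    using norm_triangle_ineq3[of ?A ?M] A_bound[OF assms] by linarith
  from sq_diff_bound[OF this norm_ge_zero norm_ge_zero Mle] show ?thesis unfolding M2 .
qed

lemma const01: "((\<lambda>s. c) has_integral c) {0..1::real}"
  using has_integral_const_real[of c 0 1] by simp

lemma main_est:
  assumes "0 < \<sigma>" "\<sigma> < 1" "1 \<le> n"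
  shows "\<bar>2 * S_sum n \<sigma> g5 + (\<Sum>l=1..n. real l powr (-\<sigma>) * real l powr (-\<sigma>))
           - real n powr (2*(1-\<sigma>)) * (arctan (1/(1-\<sigma>)) / (1-\<sigma>))\<bar>
     \<le> (2 * ZZ \<sigma> + 3 + 1/(1-\<sigma>)) * (2 * (real n powr (1-\<sigma>) / (1-\<sigma>)) + (2 * ZZ \<sigma> + 3 + 1/(1-\<sigma>)))"
proof -
  define h where "h s k l = real k powr (-\<sigma>) * real l powr (-\<sigma>) * cos (s * (ln (real k) - ln (real l)))"
    for s :: real and k l :: nat
  define D where "D = (\<Sum>l=1..n. real l powr (-\<sigma>) * real l powr (-\<sigma>))"
  define K where "K = (2 * ZZ \<sigma> + 3 + 1/(1-\<sigma>)) * (2 * (real n powr (1-\<sigma>) / (1-\<sigma>)) + (2 * ZZ \<sigma> + 3 + 1/(1-\<sigma>)))"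
  define N where "N = real n powr (2*(1-\<sigma>))"
  define H where "H s = (\<Sum>l=1..n. \<Sum>k=1..l. h s k l)" for s
  have inner: "((\<lambda>s. \<Sum>k=1..l. h s k l) has_integral
       (\<Sum>k=1..l. g5 (real k / real l) / (real k * real l) powr \<sigma>
         + (if k = l then real k powr (-\<sigma>) * real l powr (-\<sigma>) else 0))) {0..1}" if "l \<in> {1..n}" for l
    unfolding h_def by (intro has_integral_sum finite_atLeastAtMost term_int) auto
  have "(H has_integral (\<Sum>l=1..n. \<Sum>k=1..l. g5 (real k / real l) / (real k * real l) powr \<sigma>
         + (if k = l then real k powr (-\<sigma>) * real l powr (-\<sigma>) else 0))) {0..1}"
    unfolding H_def[abs_def] by (intro has_integral_sum finite_atLeastAtMost inner)
  moreover have "(\<Sum>l=1..n. \<Sum>k=1..l. g5 (real k / real l) / (real k * real l) powr \<sigma>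
         + (if k = l then real k powr (-\<sigma>) * real l powr (-\<sigma>) else 0)) = S_sum n \<sigma> g5 + D"
  proof -
    have "(\<Sum>k=1..l. g5 (real k / real l) / (real k * real l) powr \<sigma>
         + (if k = l then real k powr (-\<sigma>) * real l powr (-\<sigma>) else 0))
       = (\<Sum>k=1..l. g5 (real k / real l) / (real k * real l) powr \<sigma>) + real l powr (-\<sigma>) * real l powr (-\<sigma>)"
      if "l \<in> {1..n}" for l
      using that by (simp add: sum.distrib sum.delta')
    then show ?thesis by (simp add: S_sum_def D_def sum.distrib)
  qed
  ultimately have HI: "(H has_integral (S_sum n \<sigma> g5 + D)) {0..1}" by simp
  have A2: "(norm (\<Sum>k=1..n. gg \<sigma> s (of_nat k)))^2 = 2 * H s - D" for s
  proof -
    have "(norm (\<Sum>k=1..n. gg \<sigma> s (of_nat k)))^2 = (\<Sum>k=1..n. \<Sum>l=1..n. h s k l)"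
      unfolding normsq_sum h_def ..
    also have "\<dots> = 2 * (\<Sum>l=1..n. \<Sum>k=1..l. h s k l) - (\<Sum>l=1..n. h s l l)"
    proof (rule sym_sum)
      fix k l
      show "h s k l = h s l k" unfolding h_def
        by (metis (no_types) cos_minus minus_diff_eq mult.commute mult_minus_right)
    qed
    finally show ?thesis by (simp add: H_def D_def h_def)
  qed
  have AI: "((\<lambda>s. (norm (\<Sum>k=1..n. gg \<sigma> s (of_nat k)))^2) has_integral (2 * S_sum n \<sigma> g5 + D)) {0..1}"
  proof -
    have "((\<lambda>s. 2 * H s - D) has_integral (2 * (S_sum n \<sigma> g5 + D) - D)) {0..1}"
      by (intro has_integral_diff has_integral_mult_right HI const01)
    then show ?thesis unfolding A2 by (simp add: algebra_simps)
  qed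
  have NI: "((\<lambda>s. N * (1 / ((1-\<sigma>)^2 + s^2))) has_integral (N * (arctan (1/(1-\<sigma>)) / (1-\<sigma>)))) {0..1}"
    using assms by (intro has_integral_mult_right arctan_int) auto
  have pb: "\<bar>(norm (\<Sum>k=1..n. gg \<sigma> s (of_nat k)))^2 - N * (1 / ((1-\<sigma>)^2 + s^2))\<bar> \<le> K"
    if "s \<in> {0..1}" for s
    using pointwise_bound[of \<sigma> s n] assms that unfolding K_def N_def by simp
  have up: "2 * S_sum n \<sigma> g5 + D \<le> N * (arctan (1/(1-\<sigma>)) / (1-\<sigma>)) + K"
    by (rule has_integral_le[OF AI has_integral_add[OF NI const01]])
       (use pb in \<open>fastforce simp: abs_le_iff\<close>)
  have lo: "N * (arctan (1/(1-\<sigma>)) / (1-\<sigma>)) - K \<le> 2 * S_sum n \<sigma> g5 + D"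
    by (rule has_integral_le[OF has_integral_diff[OF NI const01] AI])
       (use pb in \<open>fastforce simp: abs_le_iff\<close>)
  show ?thesis using up lo unfolding D_def[symmetric] K_def[symmetric] N_def[symmetric] by (simp add: abs_le_iff)
qed

lemma final_bound:
  assumes "1/2 < \<sigma>" "\<sigma> < 1"
  shows "\<exists>L. \<forall>n\<ge>1. \<bar>S_sum n \<sigma> g5 / real n powr (2 * (1 - \<sigma>))
               - arctan (1 / (1 - \<sigma>)) / (2 * (1 - \<sigma>))\<bar> \<le> L * (1 / real n powr (2 * (1 - \<sigma>) / 3))"
proof -
  define a where "a = 1 - \<sigma>"
  have a0: "0 < a" using assms by (simp add: a_def)
  define B0 where "B0 = 2 * ZZ \<sigma> + 3 + 1/(1-\<sigma>)"
  define Z2 where "Z2 = suminf (\<lambda>k. real k powr (-2*\<sigma>))"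
  have sZ: "summable (\<lambda>k. real k powr (-1-\<sigma>))" using assms by (simp add: summable_real_powr_iff)
  have ZZ0: "0 \<le> ZZ \<sigma>" unfolding ZZ_def by (rule suminf_nonneg[OF sZ]) simp
  have B00: "0 \<le> B0" unfolding B0_def using ZZ0 assms by simp
  have Dle: "(\<Sum>l=1..n. real l powr (-\<sigma>) * real l powr (-\<sigma>)) \<le> Z2" for n
  proof -
    have "(\<Sum>l=1..n. real l powr (-\<sigma>) * real l powr (-\<sigma>)) = (\<Sum>l=1..n. real l powr (-2*\<sigma>))"
      by (intro sum.cong refl) (simp add: powr_add[symmetric])
    also have "\<dots> \<le> Z2" unfolding Z2_def
      by (rule sum_le_suminf) (use assms in \<open>auto simp: summable_real_powr_iff\<close>)
    finally show ?thesis .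
  qed
  have D0: "0 \<le> (\<Sum>l=1..n. real l powr (-\<sigma>) * real l powr (-\<sigma>))" for n
    by (intro sum_nonneg) auto
  define L where "L = (2 * B0 / a + B0^2 + Z2) / 2"
  have "\<bar>S_sum n \<sigma> g5 / real n powr (2 * (1 - \<sigma>))
               - arctan (1 / (1 - \<sigma>)) / (2 * (1 - \<sigma>))\<bar> \<le> L * (1 / real n powr (2 * (1 - \<sigma>) / 3))"
    if n1: "1 \<le> n" for n
  proof -
    define m where "m = real n powr a"
    have m1: "1 \<le> m" unfolding m_def using n1 a0 by (simp add: ge_one_powr_ge_zero)
    have N: "real n powr (2 * (1 - \<sigma>)) = m * m" unfolding m_def a_def by (simp add: powr_add[symmetric])
    define D where "D = (\<Sum>l=1..n. real l powr (-\<sigma>) * real l powr (-\<sigma>))"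
    define S where "S = S_sum n \<sigma> g5"
    define T where "T = arctan (1 / a) / a"
    have me: "\<bar>2 * S + D - m * m * T\<bar> \<le> B0 * (2 * (m / a) + B0)"
      using main_est[of \<sigma> n] assms n1 unfolding S_def D_def T_def B0_def m_def a_def N[unfolded m_def a_def]
      by simp
    have K: "B0 * (2 * (m / a) + B0) \<le> (2 * B0 / a + B0^2) * m"
    proof -
      have "B0 * B0 * 1 \<le> B0 * B0 * m" using m1 B00 by (intro mult_left_mono) auto
      then have "B0 * B0 \<le> B0^2 * m" by (simp add: power2_eq_square)
      then show ?thesis using a0 by (simp add: algebra_simps power2_eq_square)
    qed
    have Z2m: "D \<le> Z2 * m"
    proof -
      have "0 \<le> Z2" using Dle[of n] D0[of n] by linarith
      then have "Z2 * 1 \<le> Z2 * m" using m1 by (intro mult_left_mono) auto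
      then show ?thesis using Dle[of n] unfolding D_def by linarith
    qed
    have "\<bar>2 * S - m * m * T\<bar> \<le> 2 * L * m"
    proof -
      have e: "2 * L * m = (2 * B0 / a + B0^2) * m + Z2 * m" unfolding L_def by (simp add: algebra_simps)
      have "\<bar>2 * S - m * m * T\<bar> \<le> B0 * (2 * (m / a) + B0) + D"
        using me D0[of n] unfolding D_def[symmetric] by (simp add: abs_le_iff)
      then show ?thesis using K Z2m e by linarith
    qed
    moreover have "S / (m * m) - T / 2 = (2 * S - m * m * T) / (2 * (m * m))"
      using m1 by (simp add: field_simps)
    ultimately have "\<bar>S / (m * m) - T / 2\<bar> = \<bar>2 * S - m * m * T\<bar> / (2 * (m * m))"
      using m1 by (simp add: abs_divide)
    also have "\<dots> \<le> 2 * L * m / (2 * (m * m))"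
      by (rule divide_right_mono) (use \<open>\<bar>2 * S - m * m * T\<bar> \<le> 2 * L * m\<close> m1 in auto)
    also have "\<dots> = L / m" using m1 by (simp add: field_simps)
    also have "\<dots> \<le> L * (1 / real n powr (2 * (1 - \<sigma>) / 3))"
    proof -
      have "real n powr (2 * (1 - \<sigma>) / 3) \<le> m" unfolding m_def a_def
        using n1 assms by (intro powr_mono) auto
      moreover have "0 < real n powr (2 * (1 - \<sigma>) / 3)" using n1 by simp
      moreover have "0 \<le> L" unfolding L_def using B00 a0 Dle[of 0] by simp
      ultimately have "L / m \<le> L / real n powr (2 * (1 - \<sigma>) / 3)"
        using m1 by (intro divide_left_mono) auto
      then show ?thesis by simp
    qed
    finally have "\<bar>S / (m * m) - T / 2\<bar> \<le> L * (1 / real n powr (2 * (1 - \<sigma>) / 3))" .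
    moreover have "T / 2 = arctan (1 / (1 - \<sigma>)) / (2 * (1 - \<sigma>))" unfolding T_def a_def by simp
    ultimately show ?thesis unfolding S_def N by simp
  qed
  then show ?thesis by blast
qed

theorem theorem5p4:
  fixes \<sigma> :: real
  assumes "1/2 < \<sigma>" and "\<sigma> < 1"
  shows "((\<lambda>n. S_sum n \<sigma> g5 / real n powr (2 * (1 - \<sigma>)))
            \<longlongrightarrow> arctan (1 / (1 - \<sigma>)) / (2 * (1 - \<sigma>))) at_top
       \<and> (\<lambda>n. S_sum n \<sigma> g5 / real n powr (2 * (1 - \<sigma>))
               - arctan (1 / (1 - \<sigma>)) / (2 * (1 - \<sigma>)))
           \<in> O(\<lambda>n. 1 / real n powr (2 * (1 - \<sigma>) / 3))"
proof -
  obtain L where L: "\<And>n. 1 \<le> n \<Longrightarrow> \<bar>S_sum n \<sigma> g5 / real n powr (2 * (1 - \<sigma>))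
               - arctan (1 / (1 - \<sigma>)) / (2 * (1 - \<sigma>))\<bar> \<le> L * (1 / real n powr (2 * (1 - \<sigma>) / 3))"
    using final_bound[OF assms] by blast
  define p where "p = 2 * (1 - \<sigma>) / 3"
  have p0: "0 < p" using assms by (simp add: p_def)
  have ev: "\<forall>\<^sub>F n in at_top. norm (S_sum n \<sigma> g5 / real n powr (2 * (1 - \<sigma>))
               - arctan (1 / (1 - \<sigma>)) / (2 * (1 - \<sigma>))) \<le> L * (1 / real n powr p)"
    using eventually_ge_at_top[of "1::nat"] by eventually_elim (use L in \<open>simp add: p_def\<close>)
  have "((\<lambda>n. real n powr (-p)) \<longlongrightarrow> 0) at_top"
    using p0 by (intro tendsto_neg_powr filterlim_real_sequentially) auto
  then have "((\<lambda>n. L * (1 / real n powr p)) \<longlongrightarrow> L * 0) at_top"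
    by (intro tendsto_mult tendsto_const) (simp add: powr_minus_divide)
  then have "((\<lambda>n. S_sum n \<sigma> g5 / real n powr (2 * (1 - \<sigma>))
               - arctan (1 / (1 - \<sigma>)) / (2 * (1 - \<sigma>))) \<longlongrightarrow> 0) at_top"
    using Lim_null_comparison[OF ev] by simp
  then have T: "((\<lambda>n. S_sum n \<sigma> g5 / real n powr (2 * (1 - \<sigma>)))
            \<longlongrightarrow> arctan (1 / (1 - \<sigma>)) / (2 * (1 - \<sigma>))) at_top"
    by (rule LIM_zero_cancel)
  have "(\<lambda>n. S_sum n \<sigma> g5 / real n powr (2 * (1 - \<sigma>))
               - arctan (1 / (1 - \<sigma>)) / (2 * (1 - \<sigma>)))
           \<in> O(\<lambda>n. 1 / real n powr (2 * (1 - \<sigma>) / 3))"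
  proof (rule bigoI[where c = L])
    show "\<forall>\<^sub>F n in at_top. norm (S_sum n \<sigma> g5 / real n powr (2 * (1 - \<sigma>))
               - arctan (1 / (1 - \<sigma>)) / (2 * (1 - \<sigma>))) \<le> L * norm (1 / real n powr (2 * (1 - \<sigma>) / 3))"
      using ev by (simp add: p_def)
  qed
  with T show ?thesis by blast
qed

end
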